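(* Let $(X,\|\cdot\|)$ be a normed linear space over $\mathbb{R}$ or $\mathbb{C}$, let $a\in X$ with $a\neq 0$, and let $x_1,\dots,x_n\in X$ satisfy $\|x_j-a\|\le\|a\|$ for each $j\in\{1,\dots,n\}$. Then for any $p_1,\dots,p_n\ge0$ with $\sum_{j=1}^n p_j=1$, $$\Big\|\sum_{j=1}^n p_jx_j\Big\|\,\|a\|+\frac12\sum_{j=1}^n p_j\|x_j\|\,\|x_j-a\|\ \ge\ \frac12\|a\|\sum_{j=1}^n p_j\|x_j\|.$$ *)

theory Defs
  imports "HOL-Analysis.Analysis"
begin

end

theory Submission
  imports Defs
begin

theorem proposition2p1:
  fixes a :: "'a::real_normed_vector" and x :: "nat \<Rightarrow> 'a" and p :: "nat \<Rightarrow> real" and n :: nat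
  assumes "a \<noteq> 0"
    and "\<And>j. j \<in> {1..n} \<Longrightarrow> norm (x j - a) \<le> norm a"
    and "\<And>j. j \<in> {1..n} \<Longrightarrow> p j \<ge> 0"
    and "(\<Sum>j=1..n. p j) = 1"
  shows "norm (\<Sum>j=1..n. p j *\<^sub>R x j) * norm a
           + (1/2) * (\<Sum>j=1..n. p j * norm (x j) * norm (x j - a))
         \<ge> (1/2) * norm a * (\<Sum>j=1..n. p j * norm (x j))"
proof -
  let ?r = "norm a"
  have sa: "(\<Sum>j=1..n. p j *\<^sub>R a) = a"
    using assms(4) by (metis scaleR_left.sum scaleR_one)
  have S: "(\<Sum>j=1..n. p j *\<^sub>R x j) = a + (\<Sum>j=1..n. p j *\<^sub>R (x j - a))"
    unfolding scaleR_diff_right sum_subtractf sa by simp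
  have "norm (\<Sum>j=1..n. p j *\<^sub>R (x j - a)) \<le> (\<Sum>j=1..n. norm (p j *\<^sub>R (x j - a)))"
    by (rule norm_sum)
  also have "\<dots> = (\<Sum>j=1..n. p j * norm (x j - a))"
    by (rule sum.cong) (auto simp: assms(3))
  finally have N1: "norm (\<Sum>j=1..n. p j *\<^sub>R (x j - a)) \<le> (\<Sum>j=1..n. p j * norm (x j - a))" .
  have "norm (\<Sum>j=1..n. p j *\<^sub>R x j) \<ge> ?r - norm (\<Sum>j=1..n. p j *\<^sub>R (x j - a))"
    unfolding S by (metis norm_diff_ineq norm_minus_commute add_diff_cancel_left' diff_add_cancel norm_triangle_ineq2 add.commute)
  hence N: "norm (\<Sum>j=1..n. p j *\<^sub>R x j) \<ge> (\<Sum>j=1..n. p j * (?r - norm (x j - a)))"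
    using N1 assms(4) by (simp add: right_diff_distrib sum_subtractf sum_distrib_right[symmetric])
  have T: "(\<Sum>j=1..n. p j * (?r - norm (x j - a))) * ?r + (1/2) * (\<Sum>j=1..n. p j * norm (x j) * norm (x j - a))
     - (1/2) * ?r * (\<Sum>j=1..n. p j * norm (x j))
     = (\<Sum>j=1..n. p j * ((?r - norm (x j - a)) * (?r - norm (x j) / 2)))"
    by (simp add: sum_distrib_left sum_distrib_right sum_subtractf[symmetric] sum.distrib[symmetric] algebra_simps)
  have "(\<Sum>j=1..n. p j * ((?r - norm (x j - a)) * (?r - norm (x j) / 2))) \<ge> 0"
  proof (rule sum_nonneg)
    fix j assume j: "j \<in> {1..n}"
    have d: "norm (x j - a) \<le> ?r" using assms(2) j .
    have "norm (x j) \<le> norm (x j - a) + ?r" by (metis norm_triangle_sub add.commute)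
    hence "?r - norm (x j) / 2 \<ge> 0" using d by simp
    thus "p j * ((?r - norm (x j - a)) * (?r - norm (x j) / 2)) \<ge> 0"
      using d assms(3)[OF j] by simp
  qed
  moreover have "norm (\<Sum>j=1..n. p j *\<^sub>R x j) * ?r \<ge> (\<Sum>j=1..n. p j * (?r - norm (x j - a))) * ?r"
    using N by (simp add: mult_right_mono)
  ultimately show ?thesis using T by linarith
qed

end
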